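(* There exist $b_1,b_2\in L^\infty_{loc}(\mathbb{R})$ such that $S_2(b_1,b_2)<\infty$ and $T_2(b_1,b_2)<\infty$, but $S_{2+\varepsilon}(b_1,b_2)=\infty$ and $T_{2+\varepsilon}(b_1,b_2)=\infty$ for every $\varepsilon>0$.
   Context: For $r>0$, with $\langle g\rangle_I=\frac1{|I|}\int_Ig$ and suprema over all intervals $I\subset\mathbb{R}$: $S_r(b_1,b_2)=\sup_I\big(\frac1{|I|}\int_I|b_1-\langle b_1\rangle_I|^r\big)^{1/r}\big(\frac1{|I|}\int_I|b_2-\langle b_2\rangle_I|^r\big)^{1/r}$ and $T_r(b_1,b_2)=\sup_I\big(\frac1{|I|}\int_I|b_1-\langle b_1\rangle_I|^r|b_2-\langle b_2\rangle_I|^r\big)^{1/r}$. *)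

theory Defs
  imports "HOL-Analysis.Analysis"
begin

definition Linf_loc :: "(real \<Rightarrow> real) \<Rightarrow> bool" where
  "Linf_loc f \<longleftrightarrow> f \<in> borel_measurable lborel \<and>
     (\<forall>K. compact K \<longrightarrow> (\<exists>C. AE x in lborel. x \<in> K \<longrightarrow> \<bar>f x\<bar> \<le> C))"

definition avg :: "(real \<Rightarrow> real) \<Rightarrow> real \<Rightarrow> real \<Rightarrow> real" where
  "avg f a b = (LBINT x:{a..b}. f x) / (b - a)"

definition osc :: "real \<Rightarrow> (real \<Rightarrow> real) \<Rightarrow> real \<Rightarrow> real \<Rightarrow> real" where
  "osc r f a b = ((LBINT x:{a..b}. \<bar>f x - avg f a b\<bar> powr r) / (b - a)) powr (1 / r)"

definition S_r :: "real \<Rightarrow> (real \<Rightarrow> real) \<Rightarrow> (real \<Rightarrow> real) \<Rightarrow> ereal" where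
  "S_r r b1 b2 = (SUP I \<in> {(a, b). a < b}. ereal (osc r b1 (fst I) (snd I) * osc r b2 (fst I) (snd I)))"

definition T_r :: "real \<Rightarrow> (real \<Rightarrow> real) \<Rightarrow> (real \<Rightarrow> real) \<Rightarrow> ereal" where
  "T_r r b1 b2 = (SUP I \<in> {(a, b). a < b}. ereal
     (((LBINT x:{fst I..snd I}. \<bar>b1 x - avg b1 (fst I) (snd I)\<bar> powr r *
                                \<bar>b2 x - avg b2 (fst I) (snd I)\<bar> powr r)
        / (snd I - fst I)) powr (1 / r)))"

end

theory Submission
  imports Defs
begin

definition hh :: "int \<Rightarrow> real" where "hh k = sqrt (real_of_int k + 8)"
definition ww :: "int \<Rightarrow> real" where "ww k = 1 / (real_of_int k + 8)"
definition B1 :: "real \<Rightarrow> real" where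
  "B1 x = (if \<lfloor>x\<rfloor> \<ge> 1 \<and> \<bar>x - real_of_int \<lfloor>x\<rfloor> - 1/4\<bar> \<le> ww \<lfloor>x\<rfloor> / 2 then hh \<lfloor>x\<rfloor> else 0)"
definition B2 :: "real \<Rightarrow> real" where "B2 x = sin (2 * pi * x)"

lemma B1_meas[measurable]: "B1 \<in> borel_measurable borel"
  unfolding B1_def hh_def ww_def by measurable

lemma B2_meas[measurable]: "B2 \<in> borel_measurable borel"
  unfolding B2_def by measurable

lemma bnd_int:
  fixes f :: "real \<Rightarrow> real"
  assumes [measurable]: "f \<in> borel_measurable borel" and bd: "\<And>x. x \<in> {a..b} \<Longrightarrow> \<bar>f x\<bar> \<le> B"
  shows "set_integrable lborel {a..b} f" "f integrable_on {a..b}" "(LBINT x:{a..b}. f x) = integral {a..b} f"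
proof -
  show si: "set_integrable lborel {a..b} f"
    unfolding set_integrable_def
    by (rule integrableI_bounded_set_indicator[where B=B]) (use bd in \<open>auto simp: emeasure_lborel_Icc_eq\<close>)
  show "f integrable_on {a..b}" "(LBINT x:{a..b}. f x) = integral {a..b} f"
    using set_borel_integral_eq_integral[OF si] by auto
qed

lemma ww_pos: "k \<ge> 1 \<Longrightarrow> 0 < ww k \<and> ww k \<le> 1/9"
  unfolding ww_def by (auto simp: field_simps)

lemma B1_nonneg: "0 \<le> B1 x"
  unfolding B1_def hh_def by auto

lemma B1_le: "B1 x \<le> sqrt (\<bar>x\<bar> + 8)"
proof -
  have "real_of_int \<lfloor>x\<rfloor> \<le> \<bar>x\<bar>" by (smt (verit) of_int_floor_le)
  then show ?thesis unfolding B1_def hh_def by auto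
qed

lemma B1_bnd: "x \<in> {a..b} \<Longrightarrow> \<bar>B1 x\<bar> \<le> sqrt (\<bar>a\<bar> + \<bar>b\<bar> + 8)"
proof -
  assume "x \<in> {a..b}"
  then have "\<bar>x\<bar> + 8 \<le> \<bar>a\<bar> + \<bar>b\<bar> + 8" by auto
  then have "sqrt (\<bar>x\<bar> + 8) \<le> sqrt (\<bar>a\<bar> + \<bar>b\<bar> + 8)" by (rule real_sqrt_le_mono)
  then show ?thesis using B1_le[of x] B1_nonneg[of x] by linarith
qed

lemma B2_bnd: "\<bar>B2 x\<bar> \<le> 1" unfolding B2_def by simp

lemma B2_bnd': "x \<in> {a..b} \<Longrightarrow> \<bar>B2 x\<bar> \<le> 1" by (rule B2_bnd)

lemma B2_lip: "\<bar>B2 x - B2 y\<bar> \<le> 2 * pi * \<bar>x - y\<bar>"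
proof -
  have "\<bar>B2 x - B2 y\<bar> = 2 * \<bar>sin ((2*pi*x - 2*pi*y) / 2)\<bar> * \<bar>cos ((2*pi*x + 2*pi*y) / 2)\<bar>"
    unfolding B2_def sin_diff_sin by (simp add: abs_mult)
  also have "\<dots> \<le> 2 * \<bar>(2*pi*x - 2*pi*y) / 2\<bar> * 1"
    by (intro mult_mono abs_sin_x_le_abs_x) auto
  also have "\<dots> = 2 * pi * \<bar>x - y\<bar>"
    by (simp add: abs_mult right_diff_distrib[symmetric])
  finally show ?thesis .
qed

lemma B1_cell:
  fixes j :: int
  assumes "real_of_int j \<le> x" "x \<le> real_of_int j + 1"
  shows "B1 x = (if j \<ge> 1 \<and> \<bar>x - real_of_int j - 1/4\<bar> \<le> ww j / 2 then hh j else 0)"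
proof (cases "x < real_of_int j + 1")
  case True
  then have "\<lfloor>x\<rfloor> = j" using assms by (intro floor_unique) auto
  then show ?thesis unfolding B1_def by simp
next
  case False
  then have x: "x = real_of_int j + 1" using assms by auto
  then have fl: "\<lfloor>x\<rfloor> = j + 1" by simp
  have l: "B1 x = 0"
    unfolding B1_def fl by (cases "j + 1 \<ge> 1") (use ww_pos[of "j+1"] x in auto)
  have r: "\<not> (j \<ge> 1 \<and> \<bar>x - real_of_int j - 1/4\<bar> \<le> ww j / 2)"
    using ww_pos[of j] unfolding x by auto
  show ?thesis by (subst if_not_P[OF r]) (rule l)
qed

lemma B1_sq_int: "(\<lambda>x. B1 x ^ 2) integrable_on {a..b}"
proof (rule bnd_int(2)[where B="(sqrt (\<bar>a\<bar> + \<bar>b\<bar> + 8))^2"])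
  fix x assume "x \<in> {a..b}"
  then have "\<bar>B1 x\<bar> \<le> sqrt (\<bar>a\<bar> + \<bar>b\<bar> + 8)" by (rule B1_bnd)
  then have "\<bar>B1 x\<bar> ^ 2 \<le> (sqrt (\<bar>a\<bar> + \<bar>b\<bar> + 8)) ^ 2"
    by (intro power_mono) auto
  then show "\<bar>B1 x ^ 2\<bar> \<le> (sqrt (\<bar>a\<bar> + \<bar>b\<bar> + 8)) ^ 2" by simp
qed simp

lemma B1_int: "B1 integrable_on {a..b}"
  by (rule bnd_int(2)[where B="sqrt (\<bar>a\<bar> + \<bar>b\<bar> + 8)"]) (auto simp: B1_bnd)

lemma cell:
  fixes j :: int
  shows "integral {real_of_int j..real_of_int j+1} (\<lambda>x. B1 x ^ 2) \<le> 1"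
proof (cases "j \<ge> 1")
  case False
  have "integral {real_of_int j..real_of_int j+1} (\<lambda>x. B1 x ^ 2) = integral {real_of_int j..real_of_int j+1} (\<lambda>x. 0)"
    by (rule integral_cong) (use False in \<open>auto simp: B1_cell\<close>)
  then show ?thesis by simp
next
  case True
  define p where "p = real_of_int j + 1/4 - ww j / 2"
  define q where "q = real_of_int j + 1/4 + ww j / 2"
  have w: "0 < ww j" "ww j \<le> 1/9" using ww_pos True by auto
  define g where "g x = (if x \<in> {p..q} then hh j ^ 2 else 0)" for x
  have sub: "{p..q} \<inter> {real_of_int j..real_of_int j+1} = {p..q}"
    using w unfolding p_def q_def by auto
  have gi: "g integrable_on {real_of_int j..real_of_int j+1}"
    unfolding g_def integrable_restrict_Int sub by (rule has_integral_integrable[OF has_integral_const_real])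
  have "integral {real_of_int j..real_of_int j+1} (\<lambda>x. B1 x ^ 2) \<le> integral {real_of_int j..real_of_int j+1} g"
  proof (rule integral_le[OF B1_sq_int gi])
    fix x assume "x \<in> {real_of_int j..real_of_int j+1}"
    then show "B1 x ^ 2 \<le> g x"
      using True by (auto simp: B1_cell g_def p_def q_def split: abs_split)
  qed
  also have "\<dots> = (q - p) * hh j ^ 2"
    unfolding g_def integral_restrict_Int sub using w by (simp add: p_def q_def)
  also have "\<dots> = 1"
  proof -
    have "hh j ^ 2 = real_of_int j + 8" unfolding hh_def using True by simp
    moreover have "q - p = ww j" unfolding p_def q_def by simp
    moreover have "real_of_int j + 8 > 0" using True by simp
    ultimately show ?thesis unfolding ww_def by simp
  qed
  finally show ?thesis .
qed

lemma cells:
  fixes m :: int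
  shows "integral {real_of_int m..real_of_int m + real d} (\<lambda>x. B1 x ^ 2) \<le> real d"
proof (induction d)
  case 0
  then show ?case by simp
next
  case (Suc d)
  have e: "real_of_int m + real (Suc d) = real_of_int m + real d + 1" by simp
  have "integral {real_of_int m..real_of_int m + real (Suc d)} (\<lambda>x. B1 x ^ 2)
      = integral {real_of_int m..real_of_int m + real d} (\<lambda>x. B1 x ^ 2)
        + integral {real_of_int m + real d..real_of_int m + real d + 1} (\<lambda>x. B1 x ^ 2)"
    unfolding e using Henstock_Kurzweil_Integration.integral_combine[where a="real_of_int m" and c="real_of_int m + real d" and b="real_of_int m + real d + 1" and f="\<lambda>x. B1 x ^ 2"] B1_sq_int by simp
  also have "\<dots> \<le> real d + 1"
    using Suc.IH cell[of "m + int d"] by simp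
  finally show ?case by simp
qed

lemma U1:
  assumes "a < b"
  shows "integral {a..b} (\<lambda>x. B1 x ^ 2) \<le> b - a + 2"
proof -
  define m where "m = \<lfloor>a\<rfloor>"
  define d where "d = nat (\<lfloor>b\<rfloor> + 1 - m)"
  have m: "real_of_int m \<le> a" "a < real_of_int m + 1" unfolding m_def by linarith+
  have d: "real d = real_of_int \<lfloor>b\<rfloor> + 1 - real_of_int m"
  proof -
    have "\<lfloor>a\<rfloor> \<le> \<lfloor>b\<rfloor>" using assms by (simp add: floor_mono)
    then show ?thesis unfolding d_def m_def by (simp add: of_nat_nat)
  qed
  have "b < real_of_int \<lfloor>b\<rfloor> + 1" "real_of_int \<lfloor>b\<rfloor> \<le> b" by linarith+
  then have sub: "{a..b} \<subseteq> {real_of_int m..real_of_int m + real d}" using m d by auto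
  have "integral {a..b} (\<lambda>x. B1 x ^ 2) \<le> integral {real_of_int m..real_of_int m + real d} (\<lambda>x. B1 x ^ 2)"
    by (rule integral_subset_le[OF sub B1_sq_int B1_sq_int]) auto
  also have "\<dots> \<le> real d" by (rule cells)
  also have "\<dots> \<le> b - a + 2" using d m \<open>real_of_int \<lfloor>b\<rfloor> \<le> b\<close> by linarith
  finally show ?thesis .
qed

lemma const_int[simp]: "(\<lambda>x. c) integrable_on {a..b::real}"
  by (rule has_integral_integrable[OF has_integral_const_real])

lemma var_le:
  fixes f :: "real \<Rightarrow> real"
  assumes [measurable]: "f \<in> borel_measurable borel" and bd: "\<And>x. x \<in> {a..b} \<Longrightarrow> \<bar>f x\<bar> \<le> B"
    and ab: "a < b"
  shows "integral {a..b} (\<lambda>x. (f x - integral {a..b} f / (b - a))^2) \<le> integral {a..b} (\<lambda>x. f x ^ 2)"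
proof -
  define c where "c = integral {a..b} f / (b - a)"
  have fi: "f integrable_on {a..b}" by (rule bnd_int(2)[OF assms(1) bd])
  have f2i: "(\<lambda>x. f x ^ 2) integrable_on {a..b}"
  proof (rule bnd_int(2)[where B="B^2"])
    fix x assume "x \<in> {a..b}"
    then have "\<bar>f x\<bar> ^ 2 \<le> B ^ 2" using bd[of x] by (intro power_mono) auto
    then show "\<bar>f x ^ 2\<bar> \<le> B ^ 2" by simp
  qed simp
  have "((\<lambda>x. f x ^ 2 - 2 * c * f x + c ^ 2) has_integral
      (integral {a..b} (\<lambda>x. f x ^ 2) - 2 * c * integral {a..b} f + (b - a) * c ^ 2)) {a..b}"
  proof -
    have hc: "((\<lambda>x. c^2) has_integral ((b - a) * c^2)) {a..b}"
      using has_integral_const_real[of "c^2" a b] ab by simp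
    show ?thesis
      by (intro has_integral_add has_integral_diff has_integral_mult_right hc
        integrable_integral fi f2i)
  qed
  moreover have "(\<lambda>x. f x ^ 2 - 2 * c * f x + c ^ 2) = (\<lambda>x. (f x - c)^2)"
    by (auto simp: power2_eq_square algebra_simps)
  ultimately have "integral {a..b} (\<lambda>x. (f x - c)^2)
      = integral {a..b} (\<lambda>x. f x ^ 2) - 2 * c * integral {a..b} f + (b - a) * c ^ 2"
    using ab by (simp add: integral_unique)
  also have "integral {a..b} f = c * (b - a)" unfolding c_def using ab by simp
  finally have "integral {a..b} (\<lambda>x. (f x - c)^2) = integral {a..b} (\<lambda>x. f x ^ 2) - (b - a) * c ^ 2"
    by (simp add: power2_eq_square algebra_simps)
  moreover have "0 \<le> (b - a) * c ^ 2" using ab by simp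
  ultimately show ?thesis unfolding c_def by linarith
qed

lemma B2_int: "B2 integrable_on {a..b}"
  by (rule bnd_int(2)[where B=1]) (auto simp: B2_bnd)

lemma B2_avg_bnd:
  assumes ab: "a < b" and x: "x \<in> {a..b}"
  shows "\<bar>B2 x - integral {a..b} B2 / (b - a)\<bar> \<le> 2 * pi * (b - a)"
    and "\<bar>B2 x - integral {a..b} B2 / (b - a)\<bar> \<le> 2"
proof -
  have "integral {a..b} B2 \<le> integral {a..b} (\<lambda>y. B2 x + 2 * pi * (b - a))"
  proof (rule integral_le[OF B2_int])
    fix y assume "y \<in> {a..b}"
    then have "\<bar>x - y\<bar> \<le> b - a" using x by auto
    then have "2 * pi * \<bar>x - y\<bar> \<le> 2 * pi * (b - a)" by simp
    then show "B2 y \<le> B2 x + 2 * pi * (b - a)" using B2_lip[of x y] by linarith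
  qed simp
  moreover have "integral {a..b} (\<lambda>y. B2 x - 2 * pi * (b - a)) \<le> integral {a..b} B2"
  proof (rule integral_le[OF _ B2_int])
    fix y assume "y \<in> {a..b}"
    then have "\<bar>x - y\<bar> \<le> b - a" using x by auto
    then have "2 * pi * \<bar>x - y\<bar> \<le> 2 * pi * (b - a)" by simp
    then show "B2 x - 2 * pi * (b - a) \<le> B2 y" using B2_lip[of x y] by linarith
  qed simp
  ultimately have "(b - a) * (B2 x - 2 * pi * (b - a)) \<le> integral {a..b} B2"
     "integral {a..b} B2 \<le> (b - a) * (B2 x + 2 * pi * (b - a))"
    using ab by auto
  then have "B2 x - 2 * pi * (b - a) \<le> integral {a..b} B2 / (b - a)"
     "integral {a..b} B2 / (b - a) \<le> B2 x + 2 * pi * (b - a)"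
    using ab by (simp_all add: field_simps)
  then show "\<bar>B2 x - integral {a..b} B2 / (b - a)\<bar> \<le> 2 * pi * (b - a)" by linarith
  have "integral {a..b} B2 \<le> integral {a..b} (\<lambda>y. 1)"
    by (rule integral_le[OF B2_int]) (use B2_bnd abs_le_iff in auto)
  moreover have "integral {a..b} (\<lambda>y. -1) \<le> integral {a..b} B2"
  proof (rule integral_le[OF _ B2_int])
    fix y show "-1 \<le> B2 y" using B2_bnd[of y] by linarith
  qed simp
  ultimately have "\<bar>integral {a..b} B2 / (b - a)\<bar> \<le> 1"
    using ab by (simp add: field_simps abs_le_iff)
  then show "\<bar>B2 x - integral {a..b} B2 / (b - a)\<bar> \<le> 2" using B2_bnd[of x] by linarith
qed

lemma upper:
  assumes ab: "a < b"
  shows "osc 2 B1 a b * osc 2 B2 a b \<le> 4 * pi"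
    "((LBINT x:{a..b}. \<bar>B1 x - avg B1 a b\<bar> powr 2 * \<bar>B2 x - avg B2 a b\<bar> powr 2) / (b - a)) powr (1/2)
       \<le> 4 * pi"
proof -
  define L where "L = b - a"
  have L: "L > 0" using ab unfolding L_def by simp
  define C where "C = sqrt (\<bar>a\<bar> + \<bar>b\<bar> + 8)"
  have B1b: "\<And>x. x \<in> {a..b} \<Longrightarrow> \<bar>B1 x\<bar> \<le> C" unfolding C_def by (rule B1_bnd)
  define c1 where "c1 = integral {a..b} B1 / L"
  define c2 where "c2 = integral {a..b} B2 / L"
  have a1: "avg B1 a b = c1" unfolding avg_def c1_def L_def using bnd_int(3)[OF B1_meas B1b] by simp
  have a2: "avg B2 a b = c2" unfolding avg_def c2_def L_def using bnd_int(3)[OF B2_meas B2_bnd] by simp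
  define M where "M = min 2 (2 * pi * L)"
  have M0: "0 \<le> M" unfolding M_def using L by simp
  have Mb: "\<And>x. x \<in> {a..b} \<Longrightarrow> \<bar>B2 x - c2\<bar> \<le> M"
    unfolding M_def c2_def L_def using B2_avg_bnd[OF ab] by simp
  have Mb2: "\<And>x. x \<in> {a..b} \<Longrightarrow> (B2 x - c2)^2 \<le> M^2"
  proof -
    fix x assume "x \<in> {a..b}"
    then have "\<bar>B2 x - c2\<bar> ^ 2 \<le> M ^ 2" using Mb by (intro power_mono) auto
    then show "(B2 x - c2)^2 \<le> M^2" by simp
  qed
  have Cb2: "\<And>x. x \<in> {a..b} \<Longrightarrow> (B1 x - c1)^2 \<le> (C + \<bar>c1\<bar>)^2"
  proof -
    fix x assume "x \<in> {a..b}"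
    then have "\<bar>B1 x - c1\<bar> \<le> C + \<bar>c1\<bar>" using B1b[of x] by linarith
    then have "\<bar>B1 x - c1\<bar> ^ 2 \<le> (C + \<bar>c1\<bar>) ^ 2" by (intro power_mono) auto
    then show "(B1 x - c1)^2 \<le> (C + \<bar>c1\<bar>)^2" by simp
  qed
  have b1: "\<And>x. x \<in> {a..b} \<Longrightarrow> \<bar>(B1 x - c1)^2\<bar> \<le> (C + \<bar>c1\<bar>)^2" using Cb2 by simp
  have b2: "\<And>x. x \<in> {a..b} \<Longrightarrow> \<bar>(B2 x - c2)^2\<bar> \<le> M^2" using Mb2 by simp
  have b3: "\<And>x. x \<in> {a..b} \<Longrightarrow> \<bar>(B1 x - c1)^2 * (B2 x - c2)^2\<bar> \<le> (C + \<bar>c1\<bar>)^2 * M^2"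
    using Cb2 Mb2 by (simp add: abs_mult mult_mono)
  have m1: "(\<lambda>x. (B1 x - c1)^2) \<in> borel_measurable borel" by measurable
  have m2: "(\<lambda>x. (B2 x - c2)^2) \<in> borel_measurable borel" by measurable
  have m3: "(\<lambda>x. (B1 x - c1)^2 * (B2 x - c2)^2) \<in> borel_measurable borel" by measurable
  note i1 = bnd_int(2,3)[OF m1 b1] and i2 = bnd_int(2,3)[OF m2 b2] and i3 = bnd_int(2,3)[OF m3 b3]
  define I1 where "I1 = integral {a..b} (\<lambda>x. (B1 x - c1)^2)"
  define I2 where "I2 = integral {a..b} (\<lambda>x. (B2 x - c2)^2)"
  define I3 where "I3 = integral {a..b} (\<lambda>x. (B1 x - c1)^2 * (B2 x - c2)^2)"
  have I1n: "0 \<le> I1" unfolding I1_def by (rule integral_nonneg[OF i1(1)]) auto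
  have I2n: "0 \<le> I2" unfolding I2_def by (rule integral_nonneg[OF i2(1)]) auto
  have I3n: "0 \<le> I3" unfolding I3_def by (rule integral_nonneg[OF i3(1)]) auto
  have I1b: "I1 \<le> L + 2"
    using var_le[OF B1_meas B1b ab] U1[OF ab] unfolding I1_def c1_def L_def by simp
  have I2b: "I2 \<le> L * M^2"
  proof -
    have "I2 \<le> integral {a..b} (\<lambda>x. M^2)" unfolding I2_def
      by (rule integral_le[OF i2(1)]) (use Mb2 in auto)
    then show ?thesis using ab unfolding L_def by simp
  qed
  have I3b: "I3 \<le> M^2 * I1"
  proof -
    have h: "((\<lambda>x. M^2 * (B1 x - c1)^2) has_integral (M^2 * I1)) {a..b}"
      unfolding I1_def by (intro has_integral_mult_right integrable_integral i1(1))
    show ?thesis unfolding I3_def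
    proof (rule has_integral_le[OF integrable_integral[OF i3(1)] h])
      fix x assume "x \<in> {a..b}"
      then have "(B2 x - c2)^2 * (B1 x - c1)^2 \<le> M^2 * (B1 x - c1)^2"
        using Mb2 by (intro mult_right_mono) auto
      then show "(B1 x - c1)^2 * (B2 x - c2)^2 \<le> M^2 * (B1 x - c1)^2" by (simp add: mult.commute)
    qed
  qed
  have key: "I1 / L * M^2 \<le> 16 * pi^2"
  proof (cases "L \<le> 1")
    case True
    have "M \<le> 2 * pi * L" unfolding M_def by simp
    then have "M^2 \<le> (2 * pi * L)^2" using M0 by (intro power_mono) auto
    then have "I1 / L * M^2 \<le> (L + 2) / L * (2 * pi * L)^2"
      using I1b I1n L by (intro mult_mono divide_right_mono) auto
    also have "\<dots> = 4 * pi^2 * (L * (L + 2))" using L by (simp add: field_simps power2_eq_square)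
    also have "\<dots> \<le> 4 * pi^2 * 3"
    proof -
      have "L * (L + 2) \<le> 1 * 3" by (rule mult_mono) (use True L in auto)
      then show ?thesis by simp
    qed
    moreover have "0 \<le> pi^2" by simp
    ultimately show ?thesis by linarith
  next
    case False
    have "M \<le> 2" unfolding M_def by simp
    then have "M^2 \<le> 2^2" using M0 by (intro power_mono) auto
    moreover have "I1 / L \<le> 3" using I1b False L by (simp add: field_simps)
    ultimately have "I1 / L * M^2 \<le> 3 * 2^2" using I1n L by (intro mult_mono) auto
    moreover have "1 \<le> pi^2" using pi_gt3 by (intro one_le_power) simp
    ultimately show ?thesis by simp
  qed
  have s16: "sqrt (16 * pi^2) = 4 * pi" by (simp add: real_sqrt_mult)
  have e1: "osc 2 B1 a b = sqrt (I1 / L)"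
  proof -
    have "(\<lambda>x. \<bar>B1 x - c1\<bar> powr 2) = (\<lambda>x. (B1 x - c1)^2)" by simp
    then show ?thesis unfolding osc_def a1 I1_def L_def using i1(2) I1n L
      by (simp add: powr_half_sqrt I1_def L_def)
  qed
  have e2: "osc 2 B2 a b = sqrt (I2 / L)"
  proof -
    have "(\<lambda>x. \<bar>B2 x - c2\<bar> powr 2) = (\<lambda>x. (B2 x - c2)^2)" by simp
    then show ?thesis unfolding osc_def a2 I2_def L_def using i2(2) I2n L
      by (simp add: powr_half_sqrt I2_def L_def)
  qed
  have "osc 2 B1 a b * osc 2 B2 a b = sqrt (I1 / L * (I2 / L))" unfolding e1 e2 by (rule real_sqrt_mult[symmetric])
  also have "\<dots> \<le> sqrt (I1 / L * M^2)"
    using I2b I1n L by (intro real_sqrt_le_mono mult_left_mono) (auto simp: field_simps)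
  also have "\<dots> \<le> 4 * pi" using real_sqrt_le_mono[OF key] unfolding s16 .
  finally show "osc 2 B1 a b * osc 2 B2 a b \<le> 4 * pi" .
  have "(\<lambda>x. \<bar>B1 x - c1\<bar> powr 2 * \<bar>B2 x - c2\<bar> powr 2) = (\<lambda>x. (B1 x - c1)^2 * (B2 x - c2)^2)" by simp
  then have "((LBINT x:{a..b}. \<bar>B1 x - avg B1 a b\<bar> powr 2 * \<bar>B2 x - avg B2 a b\<bar> powr 2) / (b - a)) powr (1/2)
      = sqrt (I3 / L)"
    unfolding a1 a2 using i3(2) I3n L by (simp add: powr_half_sqrt I3_def L_def)
  also have "\<dots> \<le> sqrt (I1 / L * M^2)"
    using I3b L by (intro real_sqrt_le_mono) (auto simp: field_simps)
  also have "\<dots> \<le> 4 * pi" using real_sqrt_le_mono[OF key] unfolding s16 .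
  finally show "((LBINT x:{a..b}. \<bar>B1 x - avg B1 a b\<bar> powr 2 * \<bar>B2 x - avg B2 a b\<bar> powr 2) / (b - a)) powr (1/2)
       \<le> 4 * pi" .
qed

lemma powr_int2:
  fixes f g :: "real \<Rightarrow> real"
  assumes [measurable]: "f \<in> borel_measurable borel" "g \<in> borel_measurable borel"
    and bf: "\<And>x. x \<in> {a..b} \<Longrightarrow> \<bar>f x\<bar> \<le> Bf" and bg: "\<And>x. x \<in> {a..b} \<Longrightarrow> \<bar>g x\<bar> \<le> Bg"
    and r: "0 \<le> r"
  shows "(\<lambda>x. \<bar>f x - c\<bar> powr r * \<bar>g x - d\<bar> powr r) integrable_on {a..b}"
    "(LBINT x:{a..b}. \<bar>f x - c\<bar> powr r * \<bar>g x - d\<bar> powr r) = integral {a..b} (\<lambda>x. \<bar>f x - c\<bar> powr r * \<bar>g x - d\<bar> powr r)"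
    "(\<lambda>x. \<bar>f x - c\<bar> powr r) integrable_on {a..b}"
    "(LBINT x:{a..b}. \<bar>f x - c\<bar> powr r) = integral {a..b} (\<lambda>x. \<bar>f x - c\<bar> powr r)"
proof -
  have m1: "(\<lambda>x. \<bar>f x - c\<bar> powr r * \<bar>g x - d\<bar> powr r) \<in> borel_measurable borel" by measurable
  have m2: "(\<lambda>x. \<bar>f x - c\<bar> powr r) \<in> borel_measurable borel" by measurable
  have p1: "\<bar>f x - c\<bar> powr r \<le> (Bf + \<bar>c\<bar>) powr r" if "x \<in> {a..b}" for x
    using bf[OF that] r by (intro powr_mono2) auto
  have p2: "\<bar>g x - d\<bar> powr r \<le> (Bg + \<bar>d\<bar>) powr r" if "x \<in> {a..b}" for x
    using bg[OF that] r by (intro powr_mono2) auto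
  have b1: "\<bar>\<bar>f x - c\<bar> powr r * \<bar>g x - d\<bar> powr r\<bar> \<le> (Bf + \<bar>c\<bar>) powr r * (Bg + \<bar>d\<bar>) powr r"
    if "x \<in> {a..b}" for x
    using p1[OF that] p2[OF that] by (simp add: abs_mult mult_mono)
  have b2: "\<bar>\<bar>f x - c\<bar> powr r\<bar> \<le> (Bf + \<bar>c\<bar>) powr r" if "x \<in> {a..b}" for x
    using p1[OF that] by simp
  show "(\<lambda>x. \<bar>f x - c\<bar> powr r * \<bar>g x - d\<bar> powr r) integrable_on {a..b}"
    "(LBINT x:{a..b}. \<bar>f x - c\<bar> powr r * \<bar>g x - d\<bar> powr r) = integral {a..b} (\<lambda>x. \<bar>f x - c\<bar> powr r * \<bar>g x - d\<bar> powr r)"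
    using bnd_int(2,3)[OF m1 b1] by auto
  show "(\<lambda>x. \<bar>f x - c\<bar> powr r) integrable_on {a..b}"
    "(LBINT x:{a..b}. \<bar>f x - c\<bar> powr r) = integral {a..b} (\<lambda>x. \<bar>f x - c\<bar> powr r)"
    using bnd_int(2,3)[OF m2 b2] by auto
qed

lemma B2_zero:
  fixes k :: int
  shows "integral {real_of_int k..real_of_int k + 1} B2 = 0"
proof -
  define F where "F x = - cos (2 * pi * x) / (2 * pi)" for x
  have "(B2 has_integral (F (real_of_int k + 1) - F (real_of_int k))) {real_of_int k..real_of_int k + 1}"
  proof (rule fundamental_theorem_of_calculus)
    fix x
    have "(F has_real_derivative B2 x) (at x within {real_of_int k..real_of_int k + 1})"
      unfolding F_def B2_def by (auto intro!: derivative_eq_intros)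
    then show "(F has_vector_derivative B2 x) (at x within {real_of_int k..real_of_int k + 1})"
      by (simp add: has_real_derivative_iff_has_vector_derivative)
  qed simp
  moreover have "cos (2 * pi * (real_of_int k + 1)) = 1"
    using cos_int_2pin[of "k + 1"] by (simp add: mult.commute)
  moreover have "cos (2 * pi * real_of_int k) = 1"
    using cos_int_2pin[of k] by (simp add: mult.commute)
  ultimately show ?thesis unfolding F_def by (simp add: integral_unique)
qed

lemma B2_half:
  fixes k :: int
  assumes "real_of_int k + 1/6 \<le> x" "x \<le> real_of_int k + 1/3"
  shows "1/2 \<le> B2 x"
proof -
  define t where "t = x - real_of_int k"
  have "B2 x = sin (2 * pi * real_of_int k + 2 * pi * t)" unfolding B2_def t_def by (simp add: algebra_simps)
  also have "\<dots> = sin (2 * pi * t)"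
    unfolding sin_add using sin_int_2pin[of k] cos_int_2pin[of k] by (simp add: mult.commute)
  also have "\<dots> = cos \<bar>pi / 2 - 2 * pi * t\<bar>" by (simp add: sin_cos_eq)
  finally have e: "B2 x = cos \<bar>pi / 2 - 2 * pi * t\<bar>" .
  have t: "1/6 \<le> t" "t \<le> 1/3" using assms unfolding t_def by auto
  have "\<bar>pi / 2 - 2 * pi * t\<bar> \<le> pi / 3"
  proof -
    have "pi * (1/6) \<le> pi * t" "pi * t \<le> pi * (1/3)" using t by (simp_all add: mult_left_mono)
    then have "\<bar>pi / 2 - 2 * (pi * t)\<bar> \<le> pi / 3" unfolding abs_le_iff by linarith
    then show ?thesis by (simp add: mult.assoc)
  qed
  then have "cos (pi / 3) \<le> cos \<bar>pi / 2 - 2 * pi * t\<bar>"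
    by (intro cos_monotone_0_pi_le) auto
  then show ?thesis unfolding e cos_60 .
qed

lemma B1_avg_le:
  fixes k :: int
  assumes k: "k \<ge> 1"
  shows "integral {real_of_int k..real_of_int k + 1} B1 \<le> hh k / 2"
proof -
  have w: "0 < ww k" "ww k \<le> 1/9" using ww_pos k by auto
  have "integral {real_of_int k..real_of_int k + 1} B1 =
     integral {real_of_int k..real_of_int k + 1/2} B1 + integral {real_of_int k + 1/2..real_of_int k + 1} B1"
    using Henstock_Kurzweil_Integration.integral_combine[where a="real_of_int k" and c="real_of_int k + 1/2"
        and b="real_of_int k + 1" and f=B1] B1_int by simp
  also have "integral {real_of_int k..real_of_int k + 1/2} B1 \<le> integral {real_of_int k..real_of_int k + 1/2} (\<lambda>x. hh k)"
    by (rule integral_le[OF B1_int]) (use k in \<open>auto simp: B1_cell hh_def\<close>)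
  also have "integral {real_of_int k + 1/2..real_of_int k + 1} B1 \<le> integral {real_of_int k + 1/2..real_of_int k + 1} (\<lambda>x. 0)"
  proof (rule integral_le[OF B1_int])
    fix x assume x: "x \<in> {real_of_int k + 1/2..real_of_int k + 1}"
    then have "B1 x = (if k \<ge> 1 \<and> \<bar>x - real_of_int k - 1/4\<bar> \<le> ww k / 2 then hh k else 0)"
      by (intro B1_cell) auto
    moreover have "\<not> \<bar>x - real_of_int k - 1/4\<bar> \<le> ww k / 2" using x w by auto
    ultimately show "B1 x \<le> 0" by simp
  qed simp
  finally show ?thesis by simp
qed

lemma BB:
  assumes "0 \<le> r"
  shows "(\<lambda>x. \<bar>B1 x - c\<bar> powr r * \<bar>B2 x - d\<bar> powr r) integrable_on {a..b}"
    "(LBINT x:{a..b}. \<bar>B1 x - c\<bar> powr r * \<bar>B2 x - d\<bar> powr r) = integral {a..b} (\<lambda>x. \<bar>B1 x - c\<bar> powr r * \<bar>B2 x - d\<bar> powr r)"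
    "(\<lambda>x. \<bar>B1 x - c\<bar> powr r) integrable_on {a..b}"
    "(LBINT x:{a..b}. \<bar>B1 x - c\<bar> powr r) = integral {a..b} (\<lambda>x. \<bar>B1 x - c\<bar> powr r)"
    "(\<lambda>x. \<bar>B2 x - c\<bar> powr r) integrable_on {a..b}"
    "(LBINT x:{a..b}. \<bar>B2 x - c\<bar> powr r) = integral {a..b} (\<lambda>x. \<bar>B2 x - c\<bar> powr r)"
proof -
  have b1: "\<And>x. x \<in> {a..b} \<Longrightarrow> \<bar>B1 x\<bar> \<le> sqrt (\<bar>a\<bar> + \<bar>b\<bar> + 8)" by (rule B1_bnd)
  have b2: "\<And>x. x \<in> {a..b} \<Longrightarrow> \<bar>B2 x\<bar> \<le> 1" by (rule B2_bnd)
  note X = powr_int2[OF B1_meas B2_meas b1 b2 assms] powr_int2[OF B2_meas B1_meas b2 b1 assms]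
  show "(\<lambda>x. \<bar>B1 x - c\<bar> powr r * \<bar>B2 x - d\<bar> powr r) integrable_on {a..b}"
    "(LBINT x:{a..b}. \<bar>B1 x - c\<bar> powr r * \<bar>B2 x - d\<bar> powr r) = integral {a..b} (\<lambda>x. \<bar>B1 x - c\<bar> powr r * \<bar>B2 x - d\<bar> powr r)"
    "(\<lambda>x. \<bar>B1 x - c\<bar> powr r) integrable_on {a..b}"
    "(LBINT x:{a..b}. \<bar>B1 x - c\<bar> powr r) = integral {a..b} (\<lambda>x. \<bar>B1 x - c\<bar> powr r)"
    "(\<lambda>x. \<bar>B2 x - c\<bar> powr r) integrable_on {a..b}"
    "(LBINT x:{a..b}. \<bar>B2 x - c\<bar> powr r) = integral {a..b} (\<lambda>x. \<bar>B2 x - c\<bar> powr r)"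
    using X by auto
qed

lemma osc_nonneg: "0 \<le> osc r f a b" unfolding osc_def by simp

lemma pw:
  fixes X Y r :: real
  assumes "0 \<le> X" "0 \<le> Y" "0 < r"
  shows "(X * Y powr r) powr (1/r) = X powr (1/r) * Y"
  using assms by (simp add: powr_mult powr_powr)

lemma hh_ww:
  fixes k :: int
  assumes "k \<ge> 1" "0 < r"
  shows "ww k powr (1/r) * hh k = (real_of_int k + 8) powr (1/2 - 1/r)"
proof -
  have p: "0 < real_of_int k + 8" using assms by simp
  have "ww k powr (1/r) = 1 / (real_of_int k + 8) powr (1/r)"
    unfolding ww_def using p by (simp add: powr_divide)
  moreover have "hh k = (real_of_int k + 8) powr (1/2)"
    unfolding hh_def using p by (simp add: powr_half_sqrt)
  ultimately show ?thesis by (simp add: powr_diff)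
qed

lemma lower:
  fixes k :: int and r :: real
  assumes k: "k \<ge> 1" and r: "r \<ge> 1"
  shows "(real_of_int k + 8) powr (1/2 - 1/r) / 24 \<le>
           osc r B1 (real_of_int k) (real_of_int k + 1) * osc r B2 (real_of_int k) (real_of_int k + 1)"
    "(real_of_int k + 8) powr (1/2 - 1/r) / 4 \<le>
      ((LBINT x:{real_of_int k..real_of_int k + 1}.
          \<bar>B1 x - avg B1 (real_of_int k) (real_of_int k + 1)\<bar> powr r *
          \<bar>B2 x - avg B2 (real_of_int k) (real_of_int k + 1)\<bar> powr r)
        / (real_of_int k + 1 - real_of_int k)) powr (1/r)"
proof -
  define a where "a = real_of_int k"
  define b where "b = a + 1"
  have r0: "0 < r" "0 \<le> r" using r by auto
  have w: "0 < ww k" "ww k \<le> 1/9" using ww_pos k by auto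
  have hh3: "3 \<le> hh k"
  proof -
    have "sqrt 9 \<le> sqrt (real_of_int k + 8)" using k by (intro real_sqrt_le_mono) simp
    then show ?thesis unfolding hh_def by simp
  qed
  define c1 where "c1 = integral {a..b} B1"
  have B1b: "\<And>x. x \<in> {a..b} \<Longrightarrow> \<bar>B1 x\<bar> \<le> sqrt (\<bar>a\<bar> + \<bar>b\<bar> + 8)" by (rule B1_bnd)
  have a1: "avg B1 a b = c1" unfolding avg_def c1_def using bnd_int(3)[OF B1_meas B1b] b_def by simp
  have a2: "avg B2 a b = 0" unfolding avg_def using bnd_int(3)[OF B2_meas B2_bnd, of a b] B2_zero[of k]
    unfolding a_def b_def by simp
  have c1b: "c1 \<le> hh k / 2" unfolding c1_def a_def b_def using B1_avg_le[OF k] by simp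
  define p where "p = a + 1/4 - ww k / 2"
  define q where "q = a + 1/4 + ww k / 2"
  have pq: "a + 1/6 \<le> p" "p \<le> q" "q \<le> a + 1/3" using w unfolding p_def q_def by auto
  have B1pq: "B1 x = hh k" if "x \<in> {p..q}" for x
  proof -
    have "B1 x = (if k \<ge> 1 \<and> \<bar>x - real_of_int k - 1/4\<bar> \<le> ww k / 2 then hh k else 0)"
      using that pq unfolding a_def by (intro B1_cell) auto
    moreover have "\<bar>x - real_of_int k - 1/4\<bar> \<le> ww k / 2" using that unfolding p_def q_def a_def abs_le_iff by auto
    ultimately show ?thesis using k by simp
  qed
  have B2pq: "1/2 \<le> B2 x" if "x \<in> {a + 1/6..a + 1/3}" for x
    using that B2_half[of k x] unfolding a_def by auto
  have B1c: "hh k / 2 \<le> \<bar>B1 x - c1\<bar>" if "x \<in> {p..q}" for x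
    using B1pq[OF that] c1b hh3 by (simp add: abs_if)
  have P1: "(hh k / 2) powr r \<le> \<bar>B1 x - c1\<bar> powr r" if "x \<in> {p..q}" for x
    using B1c[OF that] hh3 r0 by (intro powr_mono2) auto
  have P2: "(1/2) powr r \<le> \<bar>B2 x - 0\<bar> powr r" if "x \<in> {a + 1/6..a + 1/3}" for x
    using B2pq[OF that] r0 by (intro powr_mono2) auto
  note I = BB[OF r0(2)]
  have sub1: "{p..q} \<subseteq> {a..b}" using pq unfolding b_def by auto
  have sub2: "{a + 1/6..a + 1/3} \<subseteq> {a..b}" unfolding b_def by auto
  have J1: "ww k * (hh k / 2) powr r \<le> integral {a..b} (\<lambda>x. \<bar>B1 x - c1\<bar> powr r)"
  proof -
    have "ww k * (hh k / 2) powr r = integral {p..q} (\<lambda>x. (hh k / 2) powr r)"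
      unfolding p_def q_def using w by simp
    also have "\<dots> \<le> integral {p..q} (\<lambda>x. \<bar>B1 x - c1\<bar> powr r)"
      by (rule integral_le[OF _ I(3)]) (auto intro: P1)
    also have "\<dots> \<le> integral {a..b} (\<lambda>x. \<bar>B1 x - c1\<bar> powr r)"
      by (rule integral_subset_le[OF sub1 I(3) I(3)]) auto
    finally show ?thesis .
  qed
  have O1: "ww k powr (1/r) * (hh k / 2) \<le> osc r B1 a b"
  proof -
    have "osc r B1 a b = (integral {a..b} (\<lambda>x. \<bar>B1 x - c1\<bar> powr r)) powr (1/r)"
      unfolding osc_def a1 unfolding I(4) by (simp add: b_def)
    moreover have "(ww k * (hh k / 2) powr r) powr (1/r) \<le> (integral {a..b} (\<lambda>x. \<bar>B1 x - c1\<bar> powr r)) powr (1/r)"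
      using J1 w r0 by (intro powr_mono2) auto
    ultimately show ?thesis using pw[of "ww k" "hh k / 2" r] w hh3 r0 by simp
  qed
  have J2: "1/6 * (1/2) powr r \<le> integral {a..b} (\<lambda>x. \<bar>B2 x - 0\<bar> powr r)"
  proof -
    have "1/6 * (1/2) powr r = integral {a + 1/6..a + 1/3} (\<lambda>x. (1/2) powr r)"
      by simp
    also have "\<dots> \<le> integral {a + 1/6..a + 1/3} (\<lambda>x. \<bar>B2 x - 0\<bar> powr r)"
      by (rule integral_le[OF _ BB(5)[OF r0(2)]]) (auto intro: P2[simplified])
    also have "\<dots> \<le> integral {a..b} (\<lambda>x. \<bar>B2 x - 0\<bar> powr r)"
      by (rule integral_subset_le[OF sub2 BB(5)[OF r0(2)]
            BB(5)[OF r0(2)]]) auto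
    finally show ?thesis .
  qed
  have O2: "1/12 \<le> osc r B2 a b"
  proof -
    have "osc r B2 a b = (integral {a..b} (\<lambda>x. \<bar>B2 x - 0\<bar> powr r)) powr (1/r)"
      unfolding osc_def a2 unfolding BB(6)[OF r0(2)] by (simp add: b_def)
    moreover have "(1/6 * (1/2) powr r) powr (1/r) \<le> (integral {a..b} (\<lambda>x. \<bar>B2 x - 0\<bar> powr r)) powr (1/r)"
      using J2 r0 by (intro powr_mono2) auto
    moreover have "(1/6 * (1/2) powr r) powr (1/r) = (1/6) powr (1/r) * (1/2)"
      using pw[of "1/6" "1/2" r] r0 by simp
    moreover have "(1/6::real) powr 1 \<le> (1/6) powr (1/r)"
      using r by (intro powr_mono') auto
    ultimately show ?thesis by simp
  qed
  have "(real_of_int k + 8) powr (1/2 - 1/r) / 24 = (ww k powr (1/r) * (hh k / 2)) * (1/12)"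
    using hh_ww[OF k r0(1)] by simp
  also have "\<dots> \<le> osc r B1 a b * osc r B2 a b"
    using O1 O2 w hh3 osc_nonneg by (intro mult_mono) auto
  finally show "(real_of_int k + 8) powr (1/2 - 1/r) / 24 \<le>
           osc r B1 (real_of_int k) (real_of_int k + 1) * osc r B2 (real_of_int k) (real_of_int k + 1)"
    unfolding a_def b_def .
  have P3: "(hh k / 2) powr r * (1/2) powr r \<le> \<bar>B1 x - c1\<bar> powr r * \<bar>B2 x - 0\<bar> powr r"
    if "x \<in> {p..q}" for x
    using P1[OF that] P2 that pq by (intro mult_mono) auto
  have J3: "ww k * ((hh k / 2) powr r * (1/2) powr r) \<le> integral {a..b} (\<lambda>x. \<bar>B1 x - c1\<bar> powr r * \<bar>B2 x - 0\<bar> powr r)"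
  proof -
    have "ww k * ((hh k / 2) powr r * (1/2) powr r) = integral {p..q} (\<lambda>x. (hh k / 2) powr r * (1/2) powr r)"
      unfolding p_def q_def using w by simp
    also have "\<dots> \<le> integral {p..q} (\<lambda>x. \<bar>B1 x - c1\<bar> powr r * \<bar>B2 x - 0\<bar> powr r)"
      by (rule integral_le[OF _ I(1)]) (auto intro: P3[simplified])
    also have "\<dots> \<le> integral {a..b} (\<lambda>x. \<bar>B1 x - c1\<bar> powr r * \<bar>B2 x - 0\<bar> powr r)"
      by (rule integral_subset_le[OF sub1 I(1) I(1)]) auto
    finally show ?thesis .
  qed
  have e3: "(hh k / 2) powr r * (1/2) powr r = (hh k / 4) powr r"
    using hh3 by (simp add: powr_mult[symmetric])
  have "(real_of_int k + 8) powr (1/2 - 1/r) / 4 = ww k powr (1/r) * (hh k / 4)"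
    using hh_ww[OF k r0(1)] by simp
  also have "\<dots> = (ww k * (hh k / 4) powr r) powr (1/r)"
    using pw[of "ww k" "hh k / 4" r] w hh3 r0 by simp
  also have "\<dots> \<le> (integral {a..b} (\<lambda>x. \<bar>B1 x - c1\<bar> powr r * \<bar>B2 x - 0\<bar> powr r)) powr (1/r)"
    using J3 w r0 hh3 unfolding e3 by (intro powr_mono2) auto
  also have "\<dots> = ((LBINT x:{a..b}. \<bar>B1 x - avg B1 a b\<bar> powr r * \<bar>B2 x - avg B2 a b\<bar> powr r) / (b - a)) powr (1/r)"
    unfolding a1 a2 unfolding I(2) by (simp add: b_def)
  finally show "(real_of_int k + 8) powr (1/2 - 1/r) / 4 \<le>
      ((LBINT x:{real_of_int k..real_of_int k + 1}.
          \<bar>B1 x - avg B1 (real_of_int k) (real_of_int k + 1)\<bar> powr r *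
          \<bar>B2 x - avg B2 (real_of_int k) (real_of_int k + 1)\<bar> powr r)
        / (real_of_int k + 1 - real_of_int k)) powr (1/r)"
    unfolding a_def b_def .
qed

lemma unbdd:
  fixes e C y :: real
  assumes e: "e > 0" and C: "C > 0"
  shows "\<exists>k::int. k \<ge> 1 \<and> y < (real_of_int k + 8) powr e / C"
proof -
  define K where "K = (C * \<bar>y\<bar> + 1) powr (1/e)"
  define k where "k = \<lceil>K\<rceil> + 1"
  have K0: "0 < K"
  proof -
    have "0 \<le> C * \<bar>y\<bar>" using C by simp
    then have p: "0 < C * \<bar>y\<bar> + 1" by linarith
    then show ?thesis unfolding K_def by simp
  qed
  have k1: "k \<ge> 1" unfolding k_def using K0 by (simp add: add_increasing)
  have "K \<le> real_of_int k + 8" unfolding k_def by linarith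
  then have "K powr e \<le> (real_of_int k + 8) powr e" using K0 e by (intro powr_mono2) auto
  moreover have "K powr e = C * \<bar>y\<bar> + 1"
  proof -
    have "0 \<le> C * \<bar>y\<bar>" using C by simp
    then have p: "0 < C * \<bar>y\<bar> + 1" by linarith
    then show ?thesis unfolding K_def using e by (simp add: powr_powr)
  qed
  ultimately have "C * \<bar>y\<bar> + 1 \<le> (real_of_int k + 8) powr e" by simp
  moreover have "C * y \<le> C * \<bar>y\<bar>" using C by (intro mult_left_mono) auto
  ultimately have "y * C < (real_of_int k + 8) powr e" by (simp add: mult.commute)
  then have "y < (real_of_int k + 8) powr e / C" by (simp add: pos_less_divide_eq[OF C])
  then show ?thesis using k1 by blast
qed

lemma Linf_B1: "Linf_loc B1"
  unfolding Linf_loc_def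
proof (intro conjI allI impI)
  show "B1 \<in> borel_measurable lborel" by simp
  fix K :: "real set" assume "compact K"
  then have "bounded K" by (rule compact_imp_bounded)
  then obtain R where R: "\<And>x. x \<in> K \<Longrightarrow> \<bar>x\<bar> \<le> R" unfolding bounded_real by blast
  have "\<forall>x. x \<in> K \<longrightarrow> \<bar>B1 x\<bar> \<le> sqrt (R + 8)"
  proof (intro allI impI)
    fix x assume "x \<in> K"
    then have "\<bar>x\<bar> + 8 \<le> R + 8" using R by simp
    then have "sqrt (\<bar>x\<bar> + 8) \<le> sqrt (R + 8)" by (rule real_sqrt_le_mono)
    then show "\<bar>B1 x\<bar> \<le> sqrt (R + 8)" using B1_le[of x] B1_nonneg[of x] by linarith
  qed
  then show "\<exists>C. AE x in lborel. x \<in> K \<longrightarrow> \<bar>B1 x\<bar> \<le> C" by (intro exI AE_I2) blast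
qed

lemma Linf_B2: "Linf_loc B2"
  unfolding Linf_loc_def
proof (intro conjI allI impI)
  show "B2 \<in> borel_measurable lborel" by simp
  fix K :: "real set"
  show "\<exists>C. AE x in lborel. x \<in> K \<longrightarrow> \<bar>B2 x\<bar> \<le> C" by (intro exI[of _ 1] AE_I2) (simp add: B2_bnd)
qed

theorem corollary4p6:
  shows "\<exists>b1 b2. Linf_loc b1 \<and> Linf_loc b2 \<and>
           S_r 2 b1 b2 < \<infinity> \<and> T_r 2 b1 b2 < \<infinity> \<and>
           (\<forall>\<epsilon>>0. S_r (2 + \<epsilon>) b1 b2 = \<infinity> \<and> T_r (2 + \<epsilon>) b1 b2 = \<infinity>)"
proof (intro exI conjI allI impI)
  show "Linf_loc B1" by (rule Linf_B1)
  show "Linf_loc B2" by (rule Linf_B2)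
  have "S_r 2 B1 B2 \<le> ereal (4 * pi)"
    unfolding S_r_def by (rule SUP_least) (auto intro: upper(1))
  then show "S_r 2 B1 B2 < \<infinity>" by (rule le_less_trans) simp
  have "T_r 2 B1 B2 \<le> ereal (4 * pi)"
    unfolding T_r_def
  proof (rule SUP_least, clarify)
    fix a b :: real assume "a < b"
    then show "ereal (((LBINT x:{fst (a, b)..snd (a, b)}. \<bar>B1 x - avg B1 (fst (a, b)) (snd (a, b))\<bar> powr 2 *
                                \<bar>B2 x - avg B2 (fst (a, b)) (snd (a, b))\<bar> powr 2)
        / (snd (a, b) - fst (a, b))) powr (1 / 2)) \<le> ereal (4 * pi)"
      using upper(2)[of a b] by simp
  qed
  then show "T_r 2 B1 B2 < \<infinity>" by (rule le_less_trans) simp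
next
  fix \<epsilon> :: real assume \<epsilon>: "\<epsilon> > 0"
  define r where "r = 2 + \<epsilon>"
  have r: "r \<ge> 1" unfolding r_def using \<epsilon> by simp
  have e: "1/2 - 1/r > 0" unfolding r_def using \<epsilon> by (simp add: field_simps)
  have big: "\<exists>I\<in>{(a, b). a < b}. x < F I"
    if x: "x < \<infinity>" and Fb: "\<And>k::int. k \<ge> 1 \<Longrightarrow> ereal ((real_of_int k + 8) powr (1/2 - 1/r) / C) \<le> F (real_of_int k, real_of_int k + 1)"
      and C: "C > 0"
    for x and F :: "real \<times> real \<Rightarrow> ereal" and C :: real
  proof -
    obtain y where y: "x \<le> ereal y" using x by (cases x) auto
    obtain k :: int where k: "k \<ge> 1" "y < (real_of_int k + 8) powr (1/2 - 1/r) / C"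
      using unbdd[OF e C] by blast
    have "ereal y < ereal ((real_of_int k + 8) powr (1/2 - 1/r) / C)" using k(2) by simp
    with y have "x < ereal ((real_of_int k + 8) powr (1/2 - 1/r) / C)" by (rule le_less_trans)
    then have "x < F (real_of_int k, real_of_int k + 1)" using Fb[OF k(1)] by (rule less_le_trans)
    moreover have "(real_of_int k, real_of_int k + 1) \<in> {(a, b). a < b}" by simp
    ultimately show ?thesis by blast
  qed
  have "S_r r B1 B2 = top"
    unfolding S_r_def SUP_eq_top_iff
  proof (intro allI impI)
    fix x :: ereal assume "x < top"
    then have "x < \<infinity>" by (simp add: top_ereal_def)
    then show "\<exists>I\<in>{(a, b). a < b}. x < ereal (osc r B1 (fst I) (snd I) * osc r B2 (fst I) (snd I))"
    proof (rule big[where C=24])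
      fix k :: int assume "k \<ge> 1"
      then show "ereal ((real_of_int k + 8) powr (1/2 - 1/r) / 24) \<le>
        ereal (osc r B1 (fst (real_of_int k, real_of_int k + 1)) (snd (real_of_int k, real_of_int k + 1)) *
               osc r B2 (fst (real_of_int k, real_of_int k + 1)) (snd (real_of_int k, real_of_int k + 1)))"
        using lower(1)[OF _ r, of k] by simp
    qed simp
  qed
  then show "S_r (2 + \<epsilon>) B1 B2 = \<infinity>" unfolding r_def by (simp add: top_ereal_def)
  have "T_r r B1 B2 = top"
    unfolding T_r_def SUP_eq_top_iff
  proof (intro allI impI)
    fix x :: ereal assume "x < top"
    then have "x < \<infinity>" by (simp add: top_ereal_def)
    then show "\<exists>I\<in>{(a, b). a < b}. x < ereal
     (((LBINT x:{fst I..snd I}. \<bar>B1 x - avg B1 (fst I) (snd I)\<bar> powr r *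
                                \<bar>B2 x - avg B2 (fst I) (snd I)\<bar> powr r)
        / (snd I - fst I)) powr (1 / r))"
    proof (rule big[where C=4])
      fix k :: int assume "k \<ge> 1"
      then show "ereal ((real_of_int k + 8) powr (1/2 - 1/r) / 4) \<le>
        ereal (((LBINT x:{fst (real_of_int k, real_of_int k + 1)..snd (real_of_int k, real_of_int k + 1)}.
           \<bar>B1 x - avg B1 (fst (real_of_int k, real_of_int k + 1)) (snd (real_of_int k, real_of_int k + 1))\<bar> powr r *
           \<bar>B2 x - avg B2 (fst (real_of_int k, real_of_int k + 1)) (snd (real_of_int k, real_of_int k + 1))\<bar> powr r)
        / (snd (real_of_int k, real_of_int k + 1) - fst (real_of_int k, real_of_int k + 1))) powr (1 / r))"
        using lower(2)[OF _ r, of k] by (simp only: fst_conv snd_conv ereal_less_eq(3))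
    qed simp
  qed
  then show "T_r (2 + \<epsilon>) B1 B2 = \<infinity>" unfolding r_def by (simp add: top_ereal_def)
qed

end
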